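(* For each fixed $x\in\mathcal X$, as $\mu\ge 0$ increases: (1) $p_{C^\mu(x)}(x)$ is non-decreasing; (2) $w(C^\mu(x))\,p_{C^\mu(x)}(x)$ is non-increasing; (3) $D^\mu(x)$ is non-increasing; (4) $w(C^\mu(x))\,p_{C^\mu(x)}(x)\,D^\mu(x)$ is non-increasing; (5) $(1-p_{C^\mu(x)}(x)-\alpha)D^\mu(x)$ is non-increasing.
   Context: Let $(X,Y)\sim P_{XY}$ on $\mathcal X\times\mathcal Y$, $\alpha\in(0,1)$. $\mathcal I$ is a finite collection of subsets of $\mathcal Y$ enumerated in a fixed lexicographic order, $w:\mathcal I\to(0,B)$ a bounded positive weight. For $C\in\mathcal I$ let $p_C(x)=\mathbb P(Y\in C\mid X=x)$, $\ell_{x,C}(\mu)=w(C)p_C(x)+\mu(p_C(x)-(1-\alpha))$ for $\mu\ge0$, $\mathcal U_x(\mu)=\max_{C\in\mathcal I}\ell_{x,C}(\mu)$. $C^\mu(x)$ is a maximizer of $\ell_{x,C}(\mu)$ over $C\in\mathcal I$, ties broken in favor of the largest $w(C)$ and then the smallest index; $D^\mu(x)=\mathbb 1\{\mathcal U_x(\mu)\ge 0\}$. *)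

theory Defs
  imports "HOL-Probability.Probability"
begin

text \<open>The finite collection \<I> is given as a list Is (its fixed enumeration; the index
of C is its position in the list).  For a fixed x, p C stands for p_C(x).\<close>

definition ell :: "('y set \<Rightarrow> real) \<Rightarrow> ('y set \<Rightarrow> real) \<Rightarrow> real \<Rightarrow> real \<Rightarrow> 'y set \<Rightarrow> real" where
  "ell w p alpha mu C = w C * p C + mu * (p C - (1 - alpha))"

definition Uval :: "'y set list \<Rightarrow> ('y set \<Rightarrow> real) \<Rightarrow> ('y set \<Rightarrow> real) \<Rightarrow> real \<Rightarrow> real \<Rightarrow> real" where
  "Uval Is w p alpha mu = Max (ell w p alpha mu ` set Is)"

definition Copt :: "'y set list \<Rightarrow> ('y set \<Rightarrow> real) \<Rightarrow> ('y set \<Rightarrow> real) \<Rightarrow> real \<Rightarrow> real \<Rightarrow> 'y set" where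
  "Copt Is w p alpha mu =
     (let U = Uval Is w p alpha mu;
          Ms = {C \<in> set Is. ell w p alpha mu C = U};
          W = Max (w ` Ms)
      in Is ! (LEAST i. i < length Is \<and> ell w p alpha mu (Is ! i) = U \<and> w (Is ! i) = W))"

definition Dval :: "'y set list \<Rightarrow> ('y set \<Rightarrow> real) \<Rightarrow> ('y set \<Rightarrow> real) \<Rightarrow> real \<Rightarrow> real \<Rightarrow> real" where
  "Dval Is w p alpha mu = (if Uval Is w p alpha mu \<ge> 0 then 1 else 0)"

text \<open>p_C(x) = P(Y \<in> C | X = x), given through a regular conditional distribution K of Y given X.\<close>
definition pC :: "('x \<Rightarrow> 'y measure) \<Rightarrow> 'x \<Rightarrow> 'y set \<Rightarrow> real" where
  "pC K x C = measure (K x) C"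

end

theory Submission
  imports Defs
begin

lemma Copt_props:
  assumes "Is \<noteq> []"
  shows "Copt Is w p alpha mu \<in> set Is \<and> ell w p alpha mu (Copt Is w p alpha mu) = Uval Is w p alpha mu"
proof -
  define U where "U = Uval Is w p alpha mu"
  define Ms where "Ms = {C \<in> set Is. ell w p alpha mu C = U}"
  define W where "W = Max (w ` Ms)"
  have "U \<in> ell w p alpha mu ` set Is"
    unfolding U_def Uval_def using assms by (intro Max_in) auto
  then have "Ms \<noteq> {}" unfolding Ms_def by auto
  moreover have "finite Ms" unfolding Ms_def by auto
  ultimately have "W \<in> w ` Ms" unfolding W_def by (intro Max_in) auto
  then obtain C where C: "C \<in> Ms" "w C = W" by auto
  then obtain i where i: "i < length Is" "Is ! i = C" unfolding Ms_def by (auto simp: in_set_conv_nth)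
  have ex: "\<exists>i. i < length Is \<and> ell w p alpha mu (Is ! i) = U \<and> w (Is ! i) = W"
    using i C unfolding Ms_def by auto
  have eq: "Copt Is w p alpha mu = Is ! (LEAST i. i < length Is \<and> ell w p alpha mu (Is ! i) = U \<and> w (Is ! i) = W)"
    unfolding Copt_def U_def Ms_def W_def Let_def by simp
  show ?thesis using LeastI_ex[OF ex] unfolding eq U_def by auto
qed

lemma Uval_ge:
  assumes "C \<in> set Is"
  shows "ell w p alpha mu C \<le> Uval Is w p alpha mu"
  unfolding Uval_def using assms by (intro Max_ge) auto

theorem proposition2:
  fixes K :: "'x \<Rightarrow> 'y measure" and Is :: "'y set list" and w :: "'y set \<Rightarrow> real"
    and alpha B :: real and x :: 'x
  assumes "\<And>x. prob_space (K x)"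
    and "\<And>x C. C \<in> set Is \<Longrightarrow> C \<in> sets (K x)"
    and "0 < alpha" and "alpha < 1"
    and "Is \<noteq> []" and "distinct Is"
    and "\<And>C. C \<in> set Is \<Longrightarrow> 0 < w C \<and> w C < B"
  shows "\<forall>mu1 mu2. 0 \<le> mu1 \<and> mu1 \<le> mu2 \<longrightarrow>
    (let p = pC K x;
         C1 = Copt Is w p alpha mu1; C2 = Copt Is w p alpha mu2;
         D1 = Dval Is w p alpha mu1; D2 = Dval Is w p alpha mu2
     in p C1 \<le> p C2
      \<and> w C2 * p C2 \<le> w C1 * p C1
      \<and> D2 \<le> D1
      \<and> w C2 * p C2 * D2 \<le> w C1 * p C1 * D1
      \<and> (1 - p C2 - alpha) * D2 \<le> (1 - p C1 - alpha) * D1)"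
proof (intro allI impI)
  fix mu1 mu2 :: real
  assume mu: "0 \<le> mu1 \<and> mu1 \<le> mu2"
  define p where "p = pC K x"
  have p0: "\<And>C. 0 \<le> p C" unfolding p_def pC_def by simp
  define C1 where "C1 = Copt Is w p alpha mu1"
  define C2 where "C2 = Copt Is w p alpha mu2"
  define U1 where "U1 = Uval Is w p alpha mu1"
  define U2 where "U2 = Uval Is w p alpha mu2"
  have c1: "C1 \<in> set Is" "ell w p alpha mu1 C1 = U1"
    using Copt_props[OF assms(5)] unfolding C1_def U1_def by auto
  have c2: "C2 \<in> set Is" "ell w p alpha mu2 C2 = U2"
    using Copt_props[OF assms(5)] unfolding C2_def U2_def by auto
  have g1: "ell w p alpha mu1 C2 \<le> U1" unfolding U1_def by (rule Uval_ge[OF c2(1)])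
  have g2: "ell w p alpha mu2 C1 \<le> U2" unfolding U2_def by (rule Uval_ge[OF c1(1)])
  have w1: "0 < w C1" and w2: "0 < w C2" using assms(7) c1(1) c2(1) by auto
  have a1: "0 \<le> w C1 * p C1" and a2: "0 \<le> w C2 * p C2" using w1 w2 p0
    by (auto intro: mult_nonneg_nonneg)
  have I1: "w C1 * p C1 + mu1 * (p C1 - (1 - alpha)) \<ge> w C2 * p C2 + mu1 * (p C2 - (1 - alpha))"
    using g1 c1 unfolding ell_def by simp
  have I2: "w C2 * p C2 + mu2 * (p C2 - (1 - alpha)) \<ge> w C1 * p C1 + mu2 * (p C1 - (1 - alpha))"
    using g2 c2 unfolding ell_def by simp
  have "(mu2 - mu1) * (p C2 - p C1) \<ge> 0" using I1 I2 by (simp add: algebra_simps)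
  have P1: "p C1 \<le> p C2"
  proof (cases "mu1 = mu2")
    case True
    then show ?thesis unfolding C1_def C2_def by simp
  next
    case False
    then have "mu2 - mu1 > 0" using mu by simp
    with \<open>(mu2 - mu1) * (p C2 - p C1) \<ge> 0\<close> show ?thesis
      by (simp add: zero_le_mult_iff)
  qed
  have "mu1 * (p C2 - p C1) \<ge> 0" using P1 mu by simp
  then have P2: "w C2 * p C2 \<le> w C1 * p C1" using I1 by (simp add: algebra_simps)
  have Dneg: "\<And>mu U. 0 \<le> mu \<Longrightarrow> U = Uval Is w p alpha mu \<Longrightarrow> U < 0 \<Longrightarrow> (\<forall>C\<in>set Is. p C - (1 - alpha) < 0)"
  proof (rule ccontr)
    fix mu U
    assume "0 \<le> mu" "U = Uval Is w p alpha mu" "U < 0" "\<not> (\<forall>C\<in>set Is. p C - (1 - alpha) < 0)"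
    then obtain C where C: "C \<in> set Is" "p C - (1 - alpha) \<ge> 0" by auto
    have "0 \<le> w C * p C" using assms(7)[OF C(1)] p0[of C] by simp
    moreover have "0 \<le> mu * (p C - (1 - alpha))" using \<open>0 \<le> mu\<close> C by simp
    ultimately have "0 \<le> ell w p alpha mu C" unfolding ell_def by simp
    also have "\<dots> \<le> U" unfolding \<open>U = _\<close> by (rule Uval_ge[OF C(1)])
    finally show False using \<open>U < 0\<close> by simp
  qed
  have U12: "U1 < 0 \<Longrightarrow> U2 \<le> U1"
  proof -
    assume "U1 < 0"
    then have "p C2 - (1 - alpha) < 0" using Dneg[OF _ U1_def] mu c2(1) by auto
    then have "mu2 * (p C2 - (1 - alpha)) \<le> mu1 * (p C2 - (1 - alpha))"
      using mu by (simp add: mult_right_mono_neg)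
    then show "U2 \<le> U1" using g1 c2(2) unfolding ell_def by simp
  qed
  have U1n: "U2 < 0 \<Longrightarrow> p C1 - (1 - alpha) < 0" using Dneg[OF _ U2_def] mu c1(1) by auto
  have D1: "Dval Is w p alpha mu1 = (if U1 \<ge> 0 then 1 else 0)" unfolding Dval_def U1_def by simp
  have D2: "Dval Is w p alpha mu2 = (if U2 \<ge> 0 then 1 else 0)" unfolding Dval_def U2_def by simp
  show "let p = pC K x;
         C1 = Copt Is w p alpha mu1; C2 = Copt Is w p alpha mu2;
         D1 = Dval Is w p alpha mu1; D2 = Dval Is w p alpha mu2
     in p C1 \<le> p C2
      \<and> w C2 * p C2 \<le> w C1 * p C1
      \<and> D2 \<le> D1
      \<and> w C2 * p C2 * D2 \<le> w C1 * p C1 * D1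
      \<and> (1 - p C2 - alpha) * D2 \<le> (1 - p C1 - alpha) * D1"
    unfolding Let_def p_def[symmetric] C1_def[symmetric] C2_def[symmetric] D1 D2
    using P1 P2 U12 U1n a1 a2 by (cases "U2 \<ge> 0"; cases "U1 \<ge> 0") auto
qed

end
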